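(* Let $n\ge2$ and let $\varphi$ be a skew morphism of $\mathbb{Z}_n$ with even complexity and auto-order $m$. Then $m$ divides $n$, and $\varphi$ taken modulo $m$ is the trivial permutation of $\mathbb{Z}_m$, i.e. $\varphi(x)\equiv x\pmod m$ for all $x\in\mathbb{Z}_n$.
   Context: $\mathbb{Z}_n$ is the cyclic group of integers modulo $n$. A skew morphism of a finite group $G$ is a permutation $\varphi$ of $G$ fixing the identity such that for each $a\in G$ there is a non-negative integer $i_a$ with $\varphi(ab)=\varphi(a)\varphi^{i_a}(b)$ for all $b\in G$. ${\rm ord}(\varphi)$ is the order of $\langle\varphi\rangle$. If $\varphi$ is non-trivial, $\pi_\varphi(a)$ is the unique such $i_a\in\{1,\dots,{\rm ord}(\varphi)-1\}$; if $\varphi$ is the identity, $\pi_\varphi(a)=1$. Let $\sigma_\varphi(x,y)=\sum_{i=0}^{x-1}\pi_\varphi(\varphi^i(y))\in\mathbb{Z}_{{\rm ord}(\varphi)}$. For a skew morphism $\varphi$ of $\mathbb{Z}_n$, the derived skew morphism $\varphi'$ is the skew morphism of $\mathbb{Z}_{{\rm ord}(\varphi)}$ given by $\varphi'(a)=\sigma_\varphi(a,1)$. Set $\varphi^{(0)}=\varphi$, $\varphi^{(i+1)}=(\varphi^{(i)})'$. For $n\ge2$ the complexity of $\varphi$ is the unique non-negative integer $c$ such that $\varphi^{(c)}$ is a skew morphism of a non-trivial cyclic group $\mathbb{Z}_m$ and $\varphi^{(c+1)}$ is a skew morphism of $\mathbb{Z}_1$; then $\varphi^{(c)}$ is the identity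 of $\mathbb{Z}_m$, and $m$ is the auto-order of $\varphi$. For a divisor $m$ of $n$, "$\varphi$ taken modulo $m$" is the map $x \bmod m\mapsto \varphi(x)\bmod m$ on $\mathbb{Z}_m$ (when well defined). *)

theory Defs
  imports Main
begin

text \<open>Elements of the cyclic group Z_n are represented by the naturals 0..n-1,
  with group operation addition mod n.  A self-map of Z_n is a function
  nat => nat of which only the values on {..<n} matter.\<close>

definition skew_morphism :: "nat \<Rightarrow> (nat \<Rightarrow> nat) \<Rightarrow> bool" where
  "skew_morphism n \<phi> \<longleftrightarrow> n \<ge> 1 \<and> bij_betw \<phi> {..<n} {..<n} \<and> \<phi> 0 = 0 \<and>
     (\<forall>a<n. \<exists>i::nat. \<forall>b<n. \<phi> ((a + b) mod n) = (\<phi> a + (\<phi> ^^ i) b) mod n)"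

definition sk_ord :: "nat \<Rightarrow> (nat \<Rightarrow> nat) \<Rightarrow> nat" where
  "sk_ord n \<phi> = (LEAST k. 0 < k \<and> (\<forall>x<n. (\<phi> ^^ k) x = x))"

definition sk_pi :: "nat \<Rightarrow> (nat \<Rightarrow> nat) \<Rightarrow> nat \<Rightarrow> nat" where
  "sk_pi n \<phi> a = (if sk_ord n \<phi> = 1 then 1 else
     (THE i. 1 \<le> i \<and> i < sk_ord n \<phi> \<and>
        (\<forall>b<n. \<phi> ((a + b) mod n) = (\<phi> a + (\<phi> ^^ i) b) mod n)))"

definition sk_sigma :: "nat \<Rightarrow> (nat \<Rightarrow> nat) \<Rightarrow> nat \<Rightarrow> nat \<Rightarrow> nat" where
  "sk_sigma n \<phi> x y = (\<Sum>i<x. sk_pi n \<phi> ((\<phi> ^^ i) y)) mod sk_ord n \<phi>"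

definition sk_derived :: "nat \<Rightarrow> (nat \<Rightarrow> nat) \<Rightarrow> (nat \<Rightarrow> nat)" where
  "sk_derived n \<phi> = (\<lambda>a. sk_sigma n \<phi> a (1 mod n))"

primrec sk_iter :: "nat \<Rightarrow> nat \<Rightarrow> (nat \<Rightarrow> nat) \<Rightarrow> nat \<times> (nat \<Rightarrow> nat)" where
  "sk_iter 0 n \<phi> = (n, \<phi>)"
| "sk_iter (Suc k) n \<phi> = (let (m, \<psi>) = sk_iter k n \<phi> in (sk_ord m \<psi>, sk_derived m \<psi>))"

definition is_complexity :: "nat \<Rightarrow> (nat \<Rightarrow> nat) \<Rightarrow> nat \<Rightarrow> bool" where
  "is_complexity n \<phi> c \<longleftrightarrow> fst (sk_iter c n \<phi>) \<ge> 2 \<and> fst (sk_iter (Suc c) n \<phi>) = 1"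

definition auto_order :: "nat \<Rightarrow> (nat \<Rightarrow> nat) \<Rightarrow> nat" where
  "auto_order n \<phi> = fst (sk_iter (THE c. is_complexity n \<phi> c) n \<phi>)"

end

theory Submission imports Defs "HOL-Library.FuncSet" begin

definition sg :: "nat \<Rightarrow> (nat \<Rightarrow> nat) \<Rightarrow> nat \<Rightarrow> nat \<Rightarrow> nat" where
  "sg n \<phi> j b = (\<Sum>i<j. sk_pi n \<phi> ((\<phi> ^^ i) b))"

lemma mod_cancel_add:
  fixes c x y n :: nat
  shows "(c + x) mod n = (c + y) mod n \<Longrightarrow> x mod n = y mod n"
  by (simp add: nat_mod_eq_iff)

lemma mod_cancel_lt:
  fixes c x y n :: nat
  assumes "x < n" "y < n" "(c + x) mod n = (c + y) mod n"
  shows "x = y"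
proof -
  have "x mod n = y mod n" using assms(3) by (simp add: nat_mod_eq_iff)
  then show ?thesis using assms(1,2) by simp
qed

lemma arith_aux:
  fixes x a n :: nat
  assumes "x < n" "0 < a" "a < n" "(x + (n - a)) mod n = 0"
  shows "x = a"
proof (cases "x \<ge> a")
  case True
  then have "x + (n - a) = (x - a) + n" using assms by simp
  then have "(x - a) mod n = 0" using assms(4) by simp
  then show ?thesis using True assms(1) by simp
next
  case False
  then have "x + (n - a) < n" "0 < x + (n - a)" using assms by auto
  then show ?thesis using assms(4) by simp
qed

context
  fixes n :: nat and \<phi> :: "nat \<Rightarrow> nat"
  assumes S: "skew_morphism n \<phi>"
begin

lemma sm_n: "n \<ge> 1" using S by (simp add: skew_morphism_def)
lemma sm_0: "\<phi> 0 = 0" using S by (simp add: skew_morphism_def)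
lemma sm_bij: "bij_betw \<phi> {..<n} {..<n}" using S by (simp add: skew_morphism_def)

lemma sm_range: "x < n \<Longrightarrow> \<phi> x < n"
  using sm_bij by (auto simp: bij_betw_def)

lemma pow_range: "x < n \<Longrightarrow> (\<phi> ^^ i) x < n"
  by (induction i) (auto simp: sm_range)

lemma pow_0: "(\<phi> ^^ i) 0 = 0"
  by (induction i) (auto simp: sm_0)

lemma pow_inj: "inj_on (\<phi> ^^ i) {..<n}"
proof (induction i)
  case 0 then show ?case by simp
next
  case (Suc i)
  have "inj_on \<phi> {..<n}" using sm_bij by (auto simp: bij_betw_def)
  moreover have "(\<phi> ^^ i) ` {..<n} \<subseteq> {..<n}" using pow_range by auto
  ultimately show ?case using Suc unfolding inj_on_def by (auto simp: pow_range)
qed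

lemma ord_exists: "\<exists>k>0. \<forall>x<n. (\<phi> ^^ k) x = x"
proof -
  define F where "F = (\<lambda>i. restrict (\<phi> ^^ i) {..<n})"
  have "F i \<in> {..<n} \<rightarrow>\<^sub>E {..<n}" for i using pow_range by (auto simp: F_def)
  then have "F ` UNIV \<subseteq> {..<n} \<rightarrow>\<^sub>E {..<n}" by auto
  then have "finite (F ` UNIV)" by (meson finite_PiE finite_lessThan finite_subset)
  then have "\<not> inj F" using finite_imageD by blast
  then obtain i j where ij: "i \<noteq> j" "F i = F j" by (auto simp: inj_def)
  then obtain a b where ab: "a < b" "F a = F b"
    by (metis linorder_neqE_nat)
  have "\<forall>x<n. (\<phi> ^^ (b - a)) x = x"
  proof (intro allI impI)
    fix x assume x: "x < n"
    have "(\<phi> ^^ a) x = (\<phi> ^^ b) x" using ab x unfolding F_def by (metis lessThan_iff restrict_apply')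
    also have "(\<phi> ^^ b) x = (\<phi> ^^ a) ((\<phi> ^^ (b - a)) x)"
      using ab(1) by (metis add_diff_inverse_nat comp_apply funpow_add less_imp_diff_less not_less_iff_gr_or_eq)
    finally show "(\<phi> ^^ (b - a)) x = x"
      using pow_inj[of a] x pow_range by (auto simp: inj_on_def)
  qed
  then show ?thesis using ab(1) by (intro exI[of _ "b - a"]) auto
qed

abbreviation "k \<equiv> sk_ord n \<phi>"

lemma ord_prop: "0 < k \<and> (\<forall>x<n. (\<phi> ^^ k) x = x)"
  unfolding sk_ord_def using ord_exists by (rule LeastI_ex)

lemma ord_pos: "0 < k" using ord_prop by blast
lemma ord_id: "x < n \<Longrightarrow> (\<phi> ^^ k) x = x" using ord_prop by blast

lemma ord_least: "0 < j \<Longrightarrow> j < k \<Longrightarrow> \<exists>x<n. (\<phi> ^^ j) x \<noteq> x"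
  unfolding sk_ord_def using not_less_Least by blast

lemma pow_k_mult: "x < n \<Longrightarrow> (\<phi> ^^ (q * k)) x = x"
proof (induction q)
  case 0 then show ?case by simp
next
  case (Suc q)
  have "(\<phi> ^^ (Suc q * k)) x = (\<phi> ^^ k) ((\<phi> ^^ (q * k)) x)" by (simp add: funpow_add)
  then show ?case using Suc ord_id by simp
qed

lemma pow_mod: "x < n \<Longrightarrow> (\<phi> ^^ j) x = (\<phi> ^^ (j mod k)) x"
proof -
  assume x: "x < n"
  have "j = j mod k + (j div k) * k" by (metis mod_div_mult_eq)
  then have "(\<phi> ^^ j) x = (\<phi> ^^ (j mod k)) ((\<phi> ^^ ((j div k) * k)) x)"
    by (metis comp_apply funpow_add)
  then show ?thesis using pow_k_mult x by simp
qed

lemma ord_dvd: assumes "\<forall>x<n. (\<phi> ^^ j) x = x" shows "k dvd j"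
proof (rule ccontr)
  assume "\<not> k dvd j"
  then have "0 < j mod k" "j mod k < k" using ord_pos by (auto simp: dvd_eq_mod_eq_0 intro: gr0I)
  moreover have "\<forall>x<n. (\<phi> ^^ (j mod k)) x = x" using assms pow_mod by metis
  ultimately show False using ord_least by blast
qed

lemma exp_eq: assumes "\<forall>x<n. (\<phi> ^^ i) x = (\<phi> ^^ j) x" shows "i mod k = j mod k"
proof -
  { fix a b assume ab: "a < b" "b < k" "\<forall>x<n. (\<phi> ^^ a) x = (\<phi> ^^ b) x"
    have "\<forall>x<n. (\<phi> ^^ (b - a)) x = x"
    proof (intro allI impI)
      fix x assume x: "x < n"
      have "(\<phi> ^^ b) x = (\<phi> ^^ a) ((\<phi> ^^ (b - a)) x)"
        using ab(1) by (metis add_diff_inverse_nat comp_apply funpow_add less_imp_diff_less not_less_iff_gr_or_eq)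
      then show "(\<phi> ^^ (b - a)) x = x"
        using ab(3) pow_inj[of a] x pow_range by (auto simp: inj_on_def)
    qed
    moreover have "0 < b - a" "b - a < k" using ab by auto
    ultimately have False using ord_least[of "b - a"] by blast }
  note * = this
  have h: "\<forall>x<n. (\<phi> ^^ (i mod k)) x = (\<phi> ^^ (j mod k)) x" using assms pow_mod by metis
  have "i mod k < k" "j mod k < k" using ord_pos by auto
  then show ?thesis using *[of "i mod k" "j mod k"] *[of "j mod k" "i mod k"] h
    by (metis linorder_neqE_nat)
qed


lemma id_ord: assumes "\<forall>x<n. \<phi> x = x" shows "k = 1"
  unfolding sk_ord_def
  by (rule Least_equality) (use assms in auto)

lemma pi_prop:
  assumes a: "a < n" and b: "b < n"
  shows "\<phi> ((a + b) mod n) = (\<phi> a + (\<phi> ^^ (sk_pi n \<phi> a)) b) mod n"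
proof (cases "k = 1")
  case True
  have idp: "\<forall>x<n. \<phi> x = x"
  proof (intro allI impI)
    fix x assume "x < n"
    then have "(\<phi> ^^ k) x = x" by (rule ord_id)
    then show "\<phi> x = x" using True by simp
  qed
  have "(a + b) mod n < n" using sm_n by simp
  then show ?thesis using True idp a b by (simp add: sk_pi_def)
next
  case False
  define P where "P = (\<lambda>j. \<forall>b<n. \<phi> ((a + b) mod n) = (\<phi> a + (\<phi> ^^ j) b) mod n)"
  obtain i where i: "P i" using S a unfolding skew_morphism_def P_def by blast
  have i': "P (i mod k)" using i pow_mod unfolding P_def by metis
  have nz: "i mod k \<noteq> 0"
  proof
    assume "i mod k = 0"
    then have h: "\<forall>b<n. \<phi> ((a + b) mod n) = (\<phi> a + b) mod n" using i' unfolding P_def by simp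
    have pa: "\<phi> a = a"
    proof (cases "a = 0")
      case True then show ?thesis using sm_0 by simp
    next
      case False
      have "(a + (n - a)) mod n = 0" using a by simp
      then have "(\<phi> a + (n - a)) mod n = 0" using h[rule_format, of "n - a"] a sm_0 False by simp
      then show ?thesis using arith_aux[where x="\<phi> a" and a=a and n=n] sm_range a False by simp
    qed
    have "\<forall>x<n. \<phi> x = x"
    proof (intro allI impI)
      fix x assume x: "x < n"
      define b' where "b' = (x + (n - a)) mod n"
      have b'n: "b' < n" using x b'_def by simp
      have "(a + b') mod n = (a + (x + (n - a))) mod n" unfolding b'_def by (simp add: mod_add_right_eq)
      also have "a + (x + (n - a)) = x + n" using a by simp
      finally have e: "(a + b') mod n = x" using x by simp
      have "\<phi> x = (\<phi> a + b') mod n" using h b'n e by metis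
      then show "\<phi> x = x" using pa e by simp
    qed
    then show False using id_ord False by simp
  qed
  have ex1: "\<exists>!j. 1 \<le> j \<and> j < k \<and> P j"
  proof (rule ex1I[of _ "i mod k"])
    show "1 \<le> i mod k \<and> i mod k < k \<and> P (i mod k)" using nz i' ord_pos by auto
  next
    fix j assume j: "1 \<le> j \<and> j < k \<and> P j"
    have "\<forall>x<n. (\<phi> ^^ j) x = (\<phi> ^^ (i mod k)) x"
    proof (intro allI impI)
      fix x assume x: "x < n"
      have "(\<phi> a + (\<phi> ^^ j) x) mod n = (\<phi> a + (\<phi> ^^ (i mod k)) x) mod n"
        using j i' x unfolding P_def by metis
      then show "(\<phi> ^^ j) x = (\<phi> ^^ (i mod k)) x" using mod_cancel_lt pow_range x by blast
    qed
    then have "j mod k = (i mod k) mod k" by (rule exp_eq)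
    then show "j = i mod k" using j by simp
  qed
  have "sk_pi n \<phi> a = (THE j. 1 \<le> j \<and> j < k \<and> P j)"
    using False unfolding sk_pi_def P_def by simp
  then have "P (sk_pi n \<phi> a)" using theI'[OF ex1] by simp
  then show ?thesis using b unfolding P_def by blast
qed

lemma pi0: "sk_pi n \<phi> 0 mod k = 1 mod k"
proof -
  have "\<forall>b<n. (\<phi> ^^ (sk_pi n \<phi> 0)) b = (\<phi> ^^ 1) b"
  proof (intro allI impI)
    fix b assume b: "b < n"
    have "\<phi> b = (\<phi> ^^ (sk_pi n \<phi> 0)) b mod n" using pi_prop[of 0 b] b sm_n sm_0 by simp
    then show "(\<phi> ^^ (sk_pi n \<phi> 0)) b = (\<phi> ^^ 1) b" using pow_range b by simp
  qed
  then show ?thesis by (rule exp_eq)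
qed

lemma pow_add:
  assumes b: "b < n" and c: "c < n"
  shows "(\<phi> ^^ j) ((b + c) mod n) = ((\<phi> ^^ j) b + (\<phi> ^^ (sg n \<phi> j b)) c) mod n"
proof (induction j)
  case 0 then show ?case by (simp add: sg_def)
next
  case (Suc j)
  define s where "s = sg n \<phi> j b"
  define p where "p = sk_pi n \<phi> ((\<phi> ^^ j) b)"
  have sgS: "sg n \<phi> (Suc j) b = p + s" unfolding sg_def s_def p_def by simp
  have "(\<phi> ^^ Suc j) ((b + c) mod n) = \<phi> (((\<phi> ^^ j) b + (\<phi> ^^ s) c) mod n)"
    using Suc by (simp add: s_def)
  also have "\<dots> = (\<phi> ((\<phi> ^^ j) b) + (\<phi> ^^ p) ((\<phi> ^^ s) c)) mod n"
    unfolding p_def by (rule pi_prop) (use pow_range b c in auto)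
  also have "(\<phi> ^^ p) ((\<phi> ^^ s) c) = (\<phi> ^^ (p + s)) c" by (simp add: funpow_add)
  finally show ?case using sgS by simp
qed

lemma sg_add: "sg n \<phi> (j + j') b = sg n \<phi> j b + sg n \<phi> j' ((\<phi> ^^ j) b)"
proof (induction j')
  case 0 then show ?case by (simp add: sg_def)
next
  case (Suc j')
  have "(\<phi> ^^ (j + j')) b = (\<phi> ^^ j') ((\<phi> ^^ j) b)" by (metis add.commute comp_apply funpow_add)
  then show ?case using Suc by (simp add: sg_def)
qed

lemma sg_k: assumes b: "b < n" shows "sg n \<phi> k b mod k = 0"
proof -
  have "\<forall>c<n. (\<phi> ^^ (sg n \<phi> k b)) c = (\<phi> ^^ 0) c"
  proof (intro allI impI)
    fix c assume c: "c < n"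
    have "(b + c) mod n < n" using sm_n by simp
    then have "(b + c) mod n = ((\<phi> ^^ k) b + (\<phi> ^^ (sg n \<phi> k b)) c) mod n"
      using pow_add[OF b c, of k] ord_id by simp
    then have "(b + c) mod n = (b + (\<phi> ^^ (sg n \<phi> k b)) c) mod n" using ord_id b by simp
    then show "(\<phi> ^^ (sg n \<phi> k b)) c = (\<phi> ^^ 0) c"
      using mod_cancel_lt[of c n "(\<phi> ^^ (sg n \<phi> k b)) c" b] c pow_range by simp
  qed
  then have "sg n \<phi> k b mod k = 0 mod k" by (rule exp_eq)
  then show ?thesis by simp
qed

lemma sg_mod: assumes b: "b < n" shows "sg n \<phi> j b mod k = sg n \<phi> (j mod k) b mod k"
proof -
  have "sg n \<phi> (r + q * k) b mod k = sg n \<phi> r b mod k" for r q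
  proof (induction q)
    case 0 then show ?case by simp
  next
    case (Suc q)
    have "sg n \<phi> (r + Suc q * k) b = sg n \<phi> (r + q * k) b + sg n \<phi> k ((\<phi> ^^ (r + q * k)) b)"
    proof -
      have e: "r + Suc q * k = (r + q * k) + k" by simp
      show ?thesis using sg_add[of "r + q * k" k b] by (simp only: e)
    qed
    moreover have "sg n \<phi> k ((\<phi> ^^ (r + q * k)) b) mod k = 0" using sg_k pow_range b by blast
    ultimately show ?case using Suc by (metis add.right_neutral mod_add_right_eq)
  qed
  moreover have "j = j mod k + (j div k) * k" by (metis mod_div_mult_eq)
  ultimately show ?thesis by metis
qed

lemma sg_zero: "sg n \<phi> a 0 mod k = a mod k"
proof -
  have "sg n \<phi> a 0 = a * sk_pi n \<phi> 0" unfolding sg_def by (simp add: pow_0)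
  then have "sg n \<phi> a 0 mod k = (a * (sk_pi n \<phi> 0 mod k)) mod k" by (simp add: mod_mult_right_eq)
  also have "\<dots> = a mod k" using pi0 by (metis mod_mult_right_eq mult.right_neutral)
  finally show ?thesis .
qed

end

lemma endo_bij:
  assumes "finite A" "f ` A \<subseteq> A" "inj_on f A" shows "bij_betw f A A"
  using assms endo_inj_surj unfolding bij_betw_def by blast

context
  fixes n :: nat and \<phi> :: "nat \<Rightarrow> nat"
  assumes S: "skew_morphism n \<phi>" and n2: "n \<ge> 2"
begin

abbreviation "kk \<equiv> sk_ord n \<phi>"
abbreviation "\<psi> \<equiv> sk_derived n \<phi>"

lemma one_lt: "1 < n" using n2 by simp

lemma psi_def: "\<psi> a = sg n \<phi> a 1 mod kk"
  using one_lt unfolding sk_derived_def sk_sigma_def sg_def by simp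

lemma L3: assumes y: "y < n" shows "sg n \<phi> a ((y + 1) mod n) mod kk = sg n \<phi> (sg n \<phi> a y) 1 mod kk"
proof -
  define Y where "Y = (y + 1) mod n"
  define s where "s = sg n \<phi> a y"
  have Yn: "Y < n" using Y_def n2 by simp
  have "\<forall>c<n. (\<phi> ^^ (sg n \<phi> a Y)) c = (\<phi> ^^ (sg n \<phi> s 1)) c"
  proof (intro allI impI)
    fix c assume c: "c < n"
    define C where "C = (1 + c) mod n"
    have Cn: "C < n" using C_def n2 by simp
    have A1: "(\<phi> ^^ a) ((Y + c) mod n) = ((\<phi> ^^ a) Y + (\<phi> ^^ (sg n \<phi> a Y)) c) mod n"
      using pow_add[OF S Yn c] .
    have AY: "(\<phi> ^^ a) Y = ((\<phi> ^^ a) y + (\<phi> ^^ s) 1) mod n"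
      unfolding Y_def s_def using pow_add[OF S y one_lt] .
    have YC: "(Y + c) mod n = (y + C) mod n" unfolding Y_def C_def
      by presburger
    have A2: "(\<phi> ^^ a) ((y + C) mod n) = ((\<phi> ^^ a) y + (\<phi> ^^ s) C) mod n"
      unfolding s_def using pow_add[OF S y Cn] .
    have AC: "(\<phi> ^^ s) C = ((\<phi> ^^ s) 1 + (\<phi> ^^ (sg n \<phi> s 1)) c) mod n"
      unfolding C_def using pow_add[OF S one_lt c] .
    have "((\<phi> ^^ a) y + (\<phi> ^^ s) 1 + (\<phi> ^^ (sg n \<phi> a Y)) c) mod n
        = ((\<phi> ^^ a) y + (\<phi> ^^ s) 1 + (\<phi> ^^ (sg n \<phi> s 1)) c) mod n"
    proof -
      have "(\<phi> ^^ a) ((Y + c) mod n) = ((\<phi> ^^ a) y + (\<phi> ^^ s) 1 + (\<phi> ^^ (sg n \<phi> a Y)) c) mod n"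
        using A1 AY by (simp add: mod_add_left_eq)
      moreover have "(\<phi> ^^ a) ((Y + c) mod n) = ((\<phi> ^^ a) y + (\<phi> ^^ s) 1 + (\<phi> ^^ (sg n \<phi> s 1)) c) mod n"
        using YC A2 AC by (simp add: mod_add_right_eq add.assoc)
      ultimately show ?thesis by simp
    qed
    then show "(\<phi> ^^ (sg n \<phi> a Y)) c = (\<phi> ^^ (sg n \<phi> s 1)) c"
      using mod_cancel_lt pow_range[OF S] c by blast
  qed
  then show ?thesis using exp_eq[OF S] unfolding Y_def s_def by blast
qed

lemma L4: assumes a: "a < kk" shows "(\<psi> ^^ x) a = sg n \<phi> a (x mod n) mod kk"
proof (induction x)
  case 0 then show ?case using sg_zero[OF S] a by simp
next
  case (Suc x)
  have xn: "x mod n < n" using n2 by simp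
  have "(\<psi> ^^ Suc x) a = \<psi> ((\<psi> ^^ x) a)" by simp
  also have "\<dots> = sg n \<phi> ((\<psi> ^^ x) a) 1 mod kk" by (rule psi_def)
  also have "\<dots> = sg n \<phi> (sg n \<phi> a (x mod n) mod kk) 1 mod kk" using Suc by (simp only:)
  also have "\<dots> = sg n \<phi> (sg n \<phi> a (x mod n)) 1 mod kk"
    using sg_mod[OF S one_lt] by metis
  also have "\<dots> = sg n \<phi> a ((x mod n + 1) mod n) mod kk" using L3[OF xn] by simp
  also have "(x mod n + 1) mod n = Suc x mod n" by (simp add: mod_Suc_eq)
  finally show ?case .
qed

lemma psi_range: "\<psi> a < kk" using psi_def ord_pos[OF S] by simp

lemma psi_0: "\<psi> 0 = 0" using psi_def by (simp add: sg_def)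

lemma psi_n: "a < kk \<Longrightarrow> (\<psi> ^^ n) a = a"
  using L4 sg_zero[OF S] by simp

lemma psi_add: assumes a: "a < kk" and b: "b < kk"
  shows "\<psi> ((a + b) mod kk) = (\<psi> a + (\<psi> ^^ ((\<phi> ^^ a) 1)) b) mod kk"
proof -
  have p: "(\<phi> ^^ a) 1 < n" using pow_range[OF S one_lt] .
  have "\<psi> ((a + b) mod kk) = sg n \<phi> (a + b) 1 mod kk"
    using psi_def sg_mod[OF S one_lt] by metis
  also have "\<dots> = (sg n \<phi> a 1 + sg n \<phi> b ((\<phi> ^^ a) 1)) mod kk" using sg_add[OF S] by simp
  also have "\<dots> = (\<psi> a + (\<psi> ^^ ((\<phi> ^^ a) 1)) b) mod kk"
    using L4[OF b, of "(\<phi> ^^ a) 1"] p psi_def by (simp add: mod_add_eq)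
  finally show ?thesis .
qed

lemma psi_skew: "skew_morphism kk \<psi>"
proof -
  have k1: "kk \<ge> 1" using ord_pos[OF S] by simp
  have inj: "inj_on \<psi> {..<kk}"
  proof (rule inj_onI)
    fix a b assume ab: "a \<in> {..<kk}" "b \<in> {..<kk}" "\<psi> a = \<psi> b"
    obtain n' where n': "n = Suc n'" using n2 by (cases n) auto
    have e: "(\<psi> ^^ n) x = (\<psi> ^^ n') (\<psi> x)" for x
      unfolding n' by (simp only: funpow_Suc_right comp_apply)
    have "(\<psi> ^^ n) a = (\<psi> ^^ n) b" using e ab(3) by simp
    then show "a = b" using psi_n ab(1,2) by simp
  qed
  have "\<psi> ` {..<kk} \<subseteq> {..<kk}" using psi_range by auto
  then have "bij_betw \<psi> {..<kk} {..<kk}" using endo_bij inj by blast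
  moreover have "\<forall>a<kk. \<exists>i. \<forall>b<kk. \<psi> ((a + b) mod kk) = (\<psi> a + (\<psi> ^^ i) b) mod kk"
    using psi_add by blast
  ultimately show ?thesis unfolding skew_morphism_def using k1 psi_0 by blast
qed

lemma psi_pi: assumes a: "a < kk"
  shows "sk_pi kk \<psi> a mod sk_ord kk \<psi> = (\<phi> ^^ a) 1 mod sk_ord kk \<psi>"
proof -
  have "\<forall>b<kk. (\<psi> ^^ (sk_pi kk \<psi> a)) b = (\<psi> ^^ ((\<phi> ^^ a) 1)) b"
  proof (intro allI impI)
    fix b assume b: "b < kk"
    have "(\<psi> a + (\<psi> ^^ (sk_pi kk \<psi> a)) b) mod kk = (\<psi> a + (\<psi> ^^ ((\<phi> ^^ a) 1)) b) mod kk"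
      using pi_prop[OF psi_skew a b] psi_add[OF a b] by simp
    then show "(\<psi> ^^ (sk_pi kk \<psi> a)) b = (\<psi> ^^ ((\<phi> ^^ a) 1)) b"
      using mod_cancel_lt pow_range[OF psi_skew] b by blast
  qed
  then show ?thesis by (rule exp_eq[OF psi_skew])
qed

lemma pi_psi: assumes k2: "kk \<ge> 2" and x: "x < n"
  shows "sk_pi n \<phi> x mod kk = (\<psi> ^^ x) 1"
  using L4[of 1 x] k2 x by (simp add: sg_def)

lemma l_dvd: "sk_ord kk \<psi> dvd n"
  using ord_dvd[OF psi_skew] psi_n by blast

end

lemma two_step:
  assumes S: "skew_morphism n \<phi>" and n2: "n \<ge> 2" and k2: "(sk_ord n \<phi>) \<ge> 2" and md: "m dvd sk_ord (sk_ord n \<phi>) (sk_derived n \<phi>)"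
    and hx: "\<forall>x < sk_ord (sk_ord n \<phi>) (sk_derived n \<phi>). sk_derived (sk_ord n \<phi>) (sk_derived n \<phi>) x mod m = x mod m"
  shows "m dvd n \<and> (\<forall>x<n. \<phi> x mod m = x mod m)"
proof -
  define l where "l = sk_ord (sk_ord n \<phi>) (sk_derived n \<phi>)"
  have PS: "skew_morphism (sk_ord n \<phi>) (sk_derived n \<phi>)" by (rule psi_skew[OF S n2])
  have l0: "0 < l" unfolding l_def by (rule ord_pos[OF PS])
  have k1: "1 < (sk_ord n \<phi>)" using k2 by simp
  have ml: "m dvd l" using md l_def by simp
  have chi: "sk_derived (sk_ord n \<phi>) (sk_derived n \<phi>) a = sg (sk_ord n \<phi>) (sk_derived n \<phi>) a 1 mod l" for a
    unfolding l_def by (rule psi_def[OF PS k2])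
  have sgm: "sg (sk_ord n \<phi>) (sk_derived n \<phi>) a 1 mod m = a mod m" if a: "a \<le> l" for a
  proof (cases "a < l")
    case True
    then have "sk_derived (sk_ord n \<phi>) (sk_derived n \<phi>) a mod m = a mod m" using hx l_def by simp
    then show ?thesis using chi ml by (simp add: mod_mod_cancel)
  next
    case False
    then have al: "a = l" using a by simp
    have "sg (sk_ord n \<phi>) (sk_derived n \<phi>) l 1 mod l = sg (sk_ord n \<phi>) (sk_derived n \<phi>) 0 1 mod l"
      unfolding l_def using sg_mod[OF PS k1, of l] l_def by simp
    then have "sg (sk_ord n \<phi>) (sk_derived n \<phi>) l 1 mod l = 0" by (simp add: sg_def)
    then have "sg (sk_ord n \<phi>) (sk_derived n \<phi>) l 1 mod m = 0" using ml by (metis mod_0 mod_mod_cancel)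
    then show ?thesis using al ml by simp
  qed
  have pim: "sk_pi (sk_ord n \<phi>) (sk_derived n \<phi>) (((sk_derived n \<phi>) ^^ a) 1) mod m = 1 mod m" if a: "a < l" for a
  proof -
    have e: "sg (sk_ord n \<phi>) (sk_derived n \<phi>) (Suc a) 1 = sg (sk_ord n \<phi>) (sk_derived n \<phi>) a 1 + sk_pi (sk_ord n \<phi>) (sk_derived n \<phi>) (((sk_derived n \<phi>) ^^ a) 1)" by (simp add: sg_def)
    have h1: "sg (sk_ord n \<phi>) (sk_derived n \<phi>) (Suc a) 1 mod m = Suc a mod m" using sgm a by simp
    have h2: "sg (sk_ord n \<phi>) (sk_derived n \<phi>) a 1 mod m = a mod m" using sgm a by simp
    have "(a + sk_pi (sk_ord n \<phi>) (sk_derived n \<phi>) (((sk_derived n \<phi>) ^^ a) 1)) mod m = (a + 1) mod m"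
      using h1 h2 e by (metis Suc_eq_plus1 mod_add_left_eq)
    then show ?thesis using mod_cancel_add by blast
  qed
  have key: "(\<phi> ^^ (sk_pi n \<phi> x)) 1 mod m = 1 mod m" if x: "x < n" for x
  proof -
    define j where "j = ((sk_derived n \<phi>) ^^ x) 1"
    have jx: "j = ((sk_derived n \<phi>) ^^ (x mod l)) 1" unfolding j_def l_def using pow_mod[OF PS k1] by blast
    have jk: "j < (sk_ord n \<phi>)" unfolding j_def using pow_range[OF PS k1] .
    have "x mod l < l" using l0 by simp
    then have p1: "sk_pi (sk_ord n \<phi>) (sk_derived n \<phi>) j mod m = 1 mod m" using pim jx by simp
    have "sk_pi (sk_ord n \<phi>) (sk_derived n \<phi>) j mod l = (\<phi> ^^ j) 1 mod l" using psi_pi[OF S n2 jk] l_def by simp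
    then have "sk_pi (sk_ord n \<phi>) (sk_derived n \<phi>) j mod m = (\<phi> ^^ j) 1 mod m" using ml by (metis mod_mod_cancel)
    then have p2: "(\<phi> ^^ j) 1 mod m = 1 mod m" using p1 by simp
    have "sk_pi n \<phi> x mod (sk_ord n \<phi>) = j" unfolding j_def using pi_psi[OF S n2 k2 x] .
    then have "(\<phi> ^^ (sk_pi n \<phi> x)) 1 = (\<phi> ^^ j) 1" using pow_mod[OF S one_lt[OF S n2]] by metis
    then show ?thesis using p2 by simp
  qed
  have mn: "m dvd n" using ml l_dvd[OF S n2] l_def by (metis dvd_trans)
  have "\<phi> x mod m = x mod m" if "x < n" for x
    using that
  proof (induction x)
    case 0 then show ?case using sm_0[OF S] by simp
  next
    case (Suc x)
    then have x: "x < n" by simp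
    have "\<phi> (Suc x) = \<phi> ((x + 1) mod n)" using Suc.prems by simp
    also have "\<dots> = (\<phi> x + (\<phi> ^^ (sk_pi n \<phi> x)) 1) mod n" using pi_prop[OF S x one_lt[OF S n2]] .
    finally have "\<phi> (Suc x) mod m = (\<phi> x + (\<phi> ^^ (sk_pi n \<phi> x)) 1) mod m"
      using mn by (simp add: mod_mod_cancel)
    also have "\<dots> = (\<phi> x mod m + (\<phi> ^^ (sk_pi n \<phi> x)) 1 mod m) mod m" by (simp add: mod_add_eq)
    also have "\<dots> = (x mod m + 1 mod m) mod m" using Suc.IH x key[OF x] by simp
    also have "\<dots> = Suc x mod m" by (metis Suc_eq_plus1 mod_add_eq)
    finally show ?case .
  qed
  then show ?thesis using mn by blast
qed

lemma deriv_skew: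
  assumes S: "skew_morphism n \<phi>"
  shows "skew_morphism (sk_ord n \<phi>) (sk_derived n \<phi>)"
proof (cases "sk_ord n \<phi> = 1")
  case True
  have z: "sk_derived n \<phi> a = 0" for a using True by (simp add: sk_derived_def sk_sigma_def)
  have "{..<Suc 0} = {0}" by auto
  then show ?thesis using True z by (simp add: skew_morphism_def bij_betw_def)
next
  case False
  have n2: "n \<ge> 2"
  proof (rule ccontr)
    assume "\<not> n \<ge> 2"
    then have "n = 1" using sm_n[OF S] by simp
    then have "\<forall>x<n. \<phi> x = x" using sm_0[OF S] by simp
    then show False using id_ord[OF S] False by simp
  qed
  show ?thesis by (rule psi_skew[OF S n2])
qed

lemma iterS: "sk_iter (Suc i) n \<phi> =
   (sk_ord (fst (sk_iter i n \<phi>)) (snd (sk_iter i n \<phi>)),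
    sk_derived (fst (sk_iter i n \<phi>)) (snd (sk_iter i n \<phi>)))"
  by (simp add: split_def Let_def)

lemma iter_skew: assumes S: "skew_morphism n \<phi>"
  shows "skew_morphism (fst (sk_iter i n \<phi>)) (snd (sk_iter i n \<phi>))"
proof (induction i)
  case 0 then show ?case using S by simp
next
  case (Suc i) then show ?case using deriv_skew by (simp only: iterS fst_conv snd_conv)
qed

lemma one_stays: assumes S: "skew_morphism n \<phi>" and h: "fst (sk_iter i n \<phi>) = 1"
  shows "fst (sk_iter (i + j) n \<phi>) = 1"
proof (induction j)
  case 0 then show ?case using h by simp
next
  case (Suc j)
  have sk: "skew_morphism (fst (sk_iter (i + j) n \<phi>)) (snd (sk_iter (i + j) n \<phi>))"
    using iter_skew[OF S] .
  have "\<forall>x<fst (sk_iter (i + j) n \<phi>). snd (sk_iter (i + j) n \<phi>) x = x"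
    using Suc sm_0[OF sk] by simp
  then have "sk_ord (fst (sk_iter (i + j) n \<phi>)) (snd (sk_iter (i + j) n \<phi>)) = 1"
    using id_ord[OF sk] by blast
  then show ?case by (simp only: add_Suc_right iterS fst_conv)
qed

theorem lemma4p2:
  fixes n c m :: nat and \<phi> :: "nat \<Rightarrow> nat"
  assumes "n \<ge> 2" and "skew_morphism n \<phi>"
    and "is_complexity n \<phi> c" and "even c"
    and "m = auto_order n \<phi>"
  shows "m dvd n \<and> (\<forall>x<n. \<phi> x mod m = x mod m)"
proof -
  note S = assms(2)
  define N where "N i = fst (sk_iter i n \<phi>)" for i
  define P where "P i = snd (sk_iter i n \<phi>)" for i
  have NS: "N (Suc i) = sk_ord (N i) (P i)" for i unfolding N_def P_def by (simp only: iterS fst_conv)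
  have PS: "P (Suc i) = sk_derived (N i) (P i)" for i unfolding N_def P_def by (simp only: iterS snd_conv)
  have sk: "skew_morphism (N i) (P i)" for i unfolding N_def P_def using iter_skew[OF S] .
  have cx: "N c \<ge> 2" "N (Suc c) = 1" using assms(3) unfolding is_complexity_def N_def by auto
  have uniq: "c' = c" if "is_complexity n \<phi> c'" for c'
  proof -
    have c': "N c' \<ge> 2" "N (Suc c') = 1" using that unfolding is_complexity_def N_def by auto
    show ?thesis
    proof (rule ccontr)
      assume "c' \<noteq> c"
      then consider "c < c'" | "c' < c" by linarith
      then show False
      proof cases
        case 1
        then have "N (Suc c + (c' - Suc c)) = 1" using one_stays[OF S] cx(2) unfolding N_def by blast
        then show False using 1 c'(1) by simp
      next
        case 2
        then have "N (Suc c' + (c - Suc c')) = 1" using one_stays[OF S] c'(2) unfolding N_def by blast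
        then show False using 2 cx(1) by simp
      qed
    qed
  qed
  have mdef: "m = N c"
  proof -
    have "(THE c. is_complexity n \<phi> c) = c" using assms(3) uniq by (rule the_equality)
    then show ?thesis using assms(5) unfolding auto_order_def N_def by simp
  qed
  have ge2: "N i \<ge> 2" if "i \<le> c" for i
  proof (rule ccontr)
    assume "\<not> N i \<ge> 2"
    moreover have "N i \<ge> 1" using sm_n[OF sk] .
    ultimately have "N i = 1" by simp
    then have "N (i + (c - i)) = 1" using one_stays[OF S] unfolding N_def by blast
    then show False using that cx(1) by simp
  qed
  define Q where "Q i = (m dvd N i \<and> (\<forall>x<N i. P i x mod m = x mod m))" for i
  have Qc: "Q c"
  proof -
    have "sk_ord (N c) (P c) = 1" using cx(2) NS by simp
    then have "\<forall>x<N c. P c x = x" using ord_id[OF sk[of c]] by (metis funpow_simps_right(2) funpow_0 One_nat_def comp_apply)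
    then show ?thesis unfolding Q_def mdef by simp
  qed
  have step: "Q i" if "i + 2 \<le> c" "Q (i + 2)" for i
  proof -
    have a1: "N i \<ge> 2" "sk_ord (N i) (P i) \<ge> 2" using ge2 that(1) NS[of i] ge2[of "Suc i"] by auto
    have e1: "N (i + 2) = sk_ord (sk_ord (N i) (P i)) (sk_derived (N i) (P i))" using NS PS by simp
    have e2: "P (i + 2) = sk_derived (sk_ord (N i) (P i)) (sk_derived (N i) (P i))" using NS PS by simp
    have "m dvd N i \<and> (\<forall>x<N i. P i x mod m = x mod m)"
      using two_step[OF sk[of i] a1(1) a1(2)] that(2) e1 e2 unfolding Q_def by simp
    then show ?thesis unfolding Q_def .
  qed
  have all: "2 * j \<le> c \<longrightarrow> Q (c - 2 * j)" for j
  proof (induction j)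
    case 0 then show ?case using Qc by simp
  next
    case (Suc j)
    show ?case
    proof
      assume h: "2 * Suc j \<le> c"
      have "c - 2 * Suc j + 2 = c - 2 * j" using h by simp
      then show "Q (c - 2 * Suc j)" using step[of "c - 2 * Suc j"] Suc h by simp
    qed
  qed
  have "c - 2 * (c div 2) = 0" using assms(4) by simp
  then have "Q 0" using all[of "c div 2"] by simp
  moreover have "N 0 = n" "P 0 = \<phi>" unfolding N_def P_def by simp_all
  ultimately show ?thesis unfolding Q_def by simp
qed

end
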